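(* Let $(C,\leq)$ be a poset. Then $(C,\leq)$ is a $\downarrow$-poset if and only if for all $c,d\in C$ with $c\leq d$ there exists a $\downarrow$-function $f\colon C\to C$ such that $f(d)=c$.
   Context: A semilattice with identity is a set $S$ with a binary operation (written concatenatively) and an element $1\in S$ such that for all $s,t,u\in S$: $ss=s$, $st=ts$, $(st)u=s(tu)$, and $1s=s$. An action of such an $S$ on a set $C$ is a function $C\times S\to C$, $(c,s)\mapsto cs$, such that $c(st)=(cs)t$ and $c1=c$ for all $c\in C$, $s,t\in S$. Given such an action, define $c\leq d$ on $C$ iff there is $s\in S$ with $ds=c$; this is a partial order. A poset is called a $\downarrow$-poset if it is isomorphic to a poset arising in this way from some action of some semilattice with identity on some set. For a poset $(C,\leq)$, a function $f\colon C\to C$ is a $\downarrow$-function if for all $c,d\in C$: (1) $f(c)\leq c$; (2) $c\leq d$ implies $f(c)\leq f(d)$; (3) $c\leq f(d)$ implies $f(c)=c$. *)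

theory Defs
  imports Main
begin

definition poset :: "'a set \<Rightarrow> ('a \<Rightarrow> 'a \<Rightarrow> bool) \<Rightarrow> bool" where
  "poset C le \<longleftrightarrow>
     (\<forall>c\<in>C. le c c) \<and>
     (\<forall>c\<in>C. \<forall>d\<in>C. le c d \<and> le d c \<longrightarrow> c = d) \<and>
     (\<forall>c\<in>C. \<forall>d\<in>C. \<forall>e\<in>C. le c d \<and> le d e \<longrightarrow> le c e)"

definition semilattice_id :: "'s set \<Rightarrow> ('s \<Rightarrow> 's \<Rightarrow> 's) \<Rightarrow> 's \<Rightarrow> bool" where
  "semilattice_id S m e \<longleftrightarrow>
     e \<in> S \<and>
     (\<forall>s\<in>S. \<forall>t\<in>S. m s t \<in> S) \<and>
     (\<forall>s\<in>S. m s s = s) \<and>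
     (\<forall>s\<in>S. \<forall>t\<in>S. m s t = m t s) \<and>
     (\<forall>s\<in>S. \<forall>t\<in>S. \<forall>u\<in>S. m (m s t) u = m s (m t u)) \<and>
     (\<forall>s\<in>S. m e s = s)"

definition sl_action ::
  "'s set \<Rightarrow> ('s \<Rightarrow> 's \<Rightarrow> 's) \<Rightarrow> 's \<Rightarrow> 'd set \<Rightarrow> ('d \<Rightarrow> 's \<Rightarrow> 'd) \<Rightarrow> bool" where
  "sl_action S m e D act \<longleftrightarrow>
     (\<forall>c\<in>D. \<forall>s\<in>S. act c s \<in> D) \<and>
     (\<forall>c\<in>D. \<forall>s\<in>S. \<forall>t\<in>S. act c (m s t) = act (act c s) t) \<and>
     (\<forall>c\<in>D. act c e = c)"

definition action_le :: "'s set \<Rightarrow> ('d \<Rightarrow> 's \<Rightarrow> 'd) \<Rightarrow> 'd \<Rightarrow> 'd \<Rightarrow> bool" where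
  "action_le S act c d \<longleftrightarrow> (\<exists>s\<in>S. act d s = c)"

text \<open>(C, le) is a down-poset, witnessed by a semilattice whose carrier lives in type 's
  acting on a set living in type 'd: it is order-isomorphic to the induced poset.\<close>
definition down_poset :: "'s itself \<Rightarrow> 'd itself \<Rightarrow> 'a set \<Rightarrow> ('a \<Rightarrow> 'a \<Rightarrow> bool) \<Rightarrow> bool" where
  "down_poset (_::'s itself) (_::'d itself) C le \<longleftrightarrow>
     (\<exists>(S::'s set) m e (D::'d set) act h.
        semilattice_id S m e \<and> sl_action S m e D act \<and>
        bij_betw h C D \<and>
        (\<forall>c\<in>C. \<forall>d\<in>C. le c d \<longleftrightarrow> action_le S act (h c) (h d)))"

definition down_function :: "'a set \<Rightarrow> ('a \<Rightarrow> 'a \<Rightarrow> bool) \<Rightarrow> ('a \<Rightarrow> 'a) \<Rightarrow> bool" where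
  "down_function C le f \<longleftrightarrow>
     (\<forall>c\<in>C. f c \<in> C) \<and>
     (\<forall>c\<in>C. le (f c) c) \<and>
     (\<forall>c\<in>C. \<forall>d\<in>C. le c d \<longrightarrow> le (f c) (f d)) \<and>
     (\<forall>c\<in>C. \<forall>d\<in>C. le c (f d) \<longrightarrow> f c = c)"

end

theory Submission
  imports Defs
begin

lemma dfC: "down_function C le f \<Longrightarrow> c \<in> C \<Longrightarrow> f c \<in> C"
  unfolding down_function_def by blast
lemma dfle: "down_function C le f \<Longrightarrow> c \<in> C \<Longrightarrow> le (f c) c"
  unfolding down_function_def by blast
lemma dfmono: "down_function C le f \<Longrightarrow> c \<in> C \<Longrightarrow> d \<in> C \<Longrightarrow> le c d \<Longrightarrow> le (f c) (f d)"
  unfolding down_function_def by blast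
lemma dffix: "down_function C le f \<Longrightarrow> c \<in> C \<Longrightarrow> d \<in> C \<Longrightarrow> le c (f d) \<Longrightarrow> f c = c"
  unfolding down_function_def by blast
lemma dfI: "(\<And>c. c \<in> C \<Longrightarrow> f c \<in> C) \<Longrightarrow> (\<And>c. c \<in> C \<Longrightarrow> le (f c) c)
  \<Longrightarrow> (\<And>c d. c \<in> C \<Longrightarrow> d \<in> C \<Longrightarrow> le c d \<Longrightarrow> le (f c) (f d))
  \<Longrightarrow> (\<And>c d. c \<in> C \<Longrightarrow> d \<in> C \<Longrightarrow> le c (f d) \<Longrightarrow> f c = c) \<Longrightarrow> down_function C le f"
  unfolding down_function_def by blast

lemma comp_down:
  assumes P: "poset C le" and f: "down_function C le f" and g: "down_function C le g"
  shows "down_function C le (f \<circ> g)"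
proof -
  have tr: "\<And>a b c. a\<in>C \<Longrightarrow> b\<in>C \<Longrightarrow> c\<in>C \<Longrightarrow> le a b \<Longrightarrow> le b c \<Longrightarrow> le a c"
    using P unfolding poset_def by blast
  show ?thesis
  proof (rule dfI)
    fix c assume c: "c \<in> C"
    show "(f \<circ> g) c \<in> C" using dfC[OF f dfC[OF g c]] by simp
    show "le ((f \<circ> g) c) c"
      using tr[OF dfC[OF f dfC[OF g c]] dfC[OF g c] c dfle[OF f dfC[OF g c]] dfle[OF g c]] by simp
  next
    fix c d assume c: "c \<in> C" and d: "d \<in> C" and "le c d"
    then have "le (g c) (g d)" by (rule dfmono[OF g])
    then show "le ((f \<circ> g) c) ((f \<circ> g) d)" using dfmono[OF f dfC[OF g c] dfC[OF g d]] by simp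
  next
    fix c d assume c: "c \<in> C" and d: "d \<in> C" and le: "le c ((f \<circ> g) d)"
    have gd: "g d \<in> C" using dfC[OF g d] .
    have fgd: "f (g d) \<in> C" using dfC[OF f gd] .
    have le': "le c (f (g d))" using le by simp
    have "le c (g d)" using tr[OF c fgd gd le' dfle[OF f gd]] .
    then have "g c = c" using dffix[OF g c d] by simp
    moreover have "f c = c" using dffix[OF f c gd le'] .
    ultimately show "(f \<circ> g) c = c" by simp
  qed
qed

lemma down_comm:
  assumes P: "poset C le" and f: "down_function C le f" and g: "down_function C le g"
    and x: "x \<in> C"
  shows "f (g x) = g (f x)"
proof -
  have anti: "\<And>a b. a\<in>C \<Longrightarrow> b\<in>C \<Longrightarrow> le a b \<Longrightarrow> le b a \<Longrightarrow> a = b"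
    using P unfolding poset_def by blast
  have key: "le (f (g x)) (g (f x))" if f: "down_function C le f" and g: "down_function C le g" for f g
  proof -
    have gx: "g x \<in> C" using dfC[OF g x] .
    have fgx: "f (g x) \<in> C" using dfC[OF f gx] .
    have a: "le (f (g x)) (g x)" using dfle[OF f gx] .
    have b: "le (g x) x" using dfle[OF g x] .
    have c: "le (f (g x)) (f x)" using dfmono[OF f gx x b] .
    have d: "g (f (g x)) = f (g x)" using dffix[OF g fgx x a] .
    have "le (g (f (g x))) (g (f x))" using dfmono[OF g fgx dfC[OF f x] c] .
    then show ?thesis using d by simp
  qed
  show ?thesis using anti[OF dfC[OF f dfC[OF g x]] dfC[OF g dfC[OF f x]]] key[OF f g] key[OF g f] by simp
qed

theorem theorem1:
  fixes C :: "'a set" and le :: "'a \<Rightarrow> 'a \<Rightarrow> bool"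
  assumes "poset C le"
  shows "(down_poset TYPE('s) TYPE('d) C le \<longrightarrow>
            (\<forall>c\<in>C. \<forall>d\<in>C. le c d \<longrightarrow> (\<exists>f. down_function C le f \<and> f d = c)))
       \<and> ((\<forall>c\<in>C. \<forall>d\<in>C. le c d \<longrightarrow> (\<exists>f. down_function C le f \<and> f d = c)) \<longrightarrow>
            down_poset TYPE(('a \<Rightarrow> 'a) set) TYPE('a) C le)"
proof (intro conjI impI ballI)
  assume "down_poset TYPE('s) TYPE('d) C le"
  then obtain S :: "'s set" and m e and D :: "'d set" and act h where
    sl: "semilattice_id S m e" and ac: "sl_action S m e D act" and bij: "bij_betw h C D"
    and ord: "\<forall>c\<in>C. \<forall>d\<in>C. le c d \<longleftrightarrow> action_le S act (h c) (h d)"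
    unfolding down_poset_def by blast
  fix c d assume c: "c \<in> C" and d: "d \<in> C" and cd: "le c d"
  then obtain s where s: "s \<in> S" and hs: "act (h d) s = h c"
    using ord unfolding action_le_def by blast
  define g where "g = the_inv_into C h"
  have gh: "\<And>x. x \<in> C \<Longrightarrow> g (h x) = x" unfolding g_def
    using bij by (simp add: bij_betw_def the_inv_into_f_f)
  have hg: "\<And>y. y \<in> D \<Longrightarrow> h (g y) = y" unfolding g_def
    using bij by (simp add: bij_betw_def f_the_inv_into_f)
  have gD: "\<And>y. y \<in> D \<Longrightarrow> g y \<in> C" unfolding g_def
    using bij by (simp add: bij_betw_def the_inv_into_into)
  have hC: "\<And>x. x \<in> C \<Longrightarrow> h x \<in> D" using bij by (meson bij_betwE)
  have actD: "\<And>y t. y \<in> D \<Longrightarrow> t \<in> S \<Longrightarrow> act y t \<in> D" using ac unfolding sl_action_def by auto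
  have actm: "\<And>y t u. y \<in> D \<Longrightarrow> t \<in> S \<Longrightarrow> u \<in> S \<Longrightarrow> act y (m t u) = act (act y t) u"
    using ac unfolding sl_action_def by auto
  have mS: "\<And>t u. t \<in> S \<Longrightarrow> u \<in> S \<Longrightarrow> m t u \<in> S" using sl unfolding semilattice_id_def by auto
  have mc: "\<And>t u. t \<in> S \<Longrightarrow> u \<in> S \<Longrightarrow> m t u = m u t" using sl unfolding semilattice_id_def by auto
  have mi: "\<And>t. t \<in> S \<Longrightarrow> m t t = t" using sl unfolding semilattice_id_def by auto
  have ma: "\<And>t u v. t \<in> S \<Longrightarrow> u \<in> S \<Longrightarrow> v \<in> S \<Longrightarrow> m (m t u) v = m t (m u v)"
    using sl unfolding semilattice_id_def by auto
  have ordI: "\<And>x y t. x \<in> C \<Longrightarrow> y \<in> C \<Longrightarrow> t \<in> S \<Longrightarrow> act (h y) t = h x \<Longrightarrow> le x y"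
    using ord unfolding action_le_def by blast
  define f where "f = (\<lambda>x. g (act (h x) s))"
  have fC: "\<And>x. x \<in> C \<Longrightarrow> f x \<in> C" unfolding f_def using gD actD hC s by auto
  have hf: "\<And>x. x \<in> C \<Longrightarrow> h (f x) = act (h x) s" unfolding f_def using hg actD hC s by auto
  have "down_function C le f"
  proof (rule dfI)
    fix x assume x: "x \<in> C"
    show "f x \<in> C" using fC x .
    show "le (f x) x" using ordI[OF fC[OF x] x s] hf[OF x] by simp
  next
    fix x y assume x: "x \<in> C" and y: "y \<in> C" and "le x y"
    then obtain t where t: "t \<in> S" and ht: "act (h y) t = h x"
      using ord unfolding action_le_def by blast
    have "h (f x) = act (act (h y) t) s" using hf x ht by simp
    also have "\<dots> = act (h y) (m t s)" using actm hC y t s by simp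
    also have "\<dots> = act (h y) (m s t)" using mc t s by simp
    also have "\<dots> = act (h (f y)) t" using actm hC y t s hf by simp
    finally show "le (f x) (f y)" using ordI[OF fC[OF x] fC[OF y] t] by simp
  next
    fix x y assume x: "x \<in> C" and y: "y \<in> C" and "le x (f y)"
    then obtain t where t: "t \<in> S" and ht: "act (h (f y)) t = h x"
      using ord fC unfolding action_le_def by blast
    have hx: "h x = act (h y) (m s t)" using ht hf y actm hC s t by simp
    have "m (m s t) s = m s (m t s)" using ma s t by simp
    also have "\<dots> = m s (m s t)" using mc s t by simp
    also have "\<dots> = m (m s s) t" using ma s t by simp
    also have "\<dots> = m s t" using mi s by simp
    finally have e: "m (m s t) s = m s t" .
    have "h (f x) = act (act (h y) (m s t)) s" using hf x hx by simp
    also have "\<dots> = act (h y) (m (m s t) s)" using actm hC y mS s t by simp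
    finally have "h (f x) = h x" using e hx by simp
    then have "g (h (f x)) = g (h x)" by simp
    then show "f x = x" using gh fC x by simp
  qed
  moreover have "f d = c" using hs gh c unfolding f_def by simp
  ultimately show "\<exists>f. down_function C le f \<and> f d = c" by blast
next
  assume H: "\<forall>c\<in>C. \<forall>d\<in>C. le c d \<longrightarrow> (\<exists>f. down_function C le f \<and> f d = c)"
  define S where "S = {f. down_function C le f \<and> (\<forall>x. x \<notin> C \<longrightarrow> f x = x)}"
  have P: "poset C le" by fact
  have refl: "\<And>x. x \<in> C \<Longrightarrow> le x x" using P unfolding poset_def by blast
  have Sdf: "\<And>f. f \<in> S \<Longrightarrow> down_function C le f" unfolding S_def by blast
  have Sout: "\<And>f x. f \<in> S \<Longrightarrow> x \<notin> C \<Longrightarrow> f x = x" unfolding S_def by blast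
  have SI: "\<And>f. down_function C le f \<Longrightarrow> (\<And>x. x \<notin> C \<Longrightarrow> f x = x) \<Longrightarrow> f \<in> S"
    unfolding S_def by blast
  have idS: "id \<in> S"
  proof (rule SI)
    show "down_function C le id" by (rule dfI) (simp_all add: refl)
  qed simp
  have compS: "f \<circ> g \<in> S" if "f \<in> S" "g \<in> S" for f g
  proof (rule SI)
    show "down_function C le (f \<circ> g)" using comp_down[OF P Sdf[OF that(1)] Sdf[OF that(2)]] .
    fix x assume "x \<notin> C" then show "(f \<circ> g) x = x" using Sout[OF that(1)] Sout[OF that(2)] by simp
  qed
  have commS: "f \<circ> g = g \<circ> f" if "f \<in> S" "g \<in> S" for f g
  proof
    fix x show "(f \<circ> g) x = (g \<circ> f) x"
    proof (cases "x \<in> C")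
      case True then show ?thesis using down_comm[OF P Sdf[OF that(1)] Sdf[OF that(2)] True] by simp
    next
      case False then show ?thesis using Sout[OF that(1)] Sout[OF that(2)] False by simp
    qed
  qed
  have idemS: "f \<circ> f = f" if "f \<in> S" for f
  proof
    fix x show "(f \<circ> f) x = f x"
    proof (cases "x \<in> C")
      case True
      have df: "down_function C le f" using Sdf[OF that] .
      have fx: "f x \<in> C" using dfC[OF df True] .
      have "f (f x) = f x" using dffix[OF df fx True refl[OF fx]] .
      then show ?thesis by simp
    next
      case False then show ?thesis using Sout[OF that] False by simp
    qed
  qed
  have sl: "semilattice_id S (\<circ>) id"
    unfolding semilattice_id_def
  proof (intro conjI ballI)
    show "id \<in> S" by (rule idS)
  next
    fix s t assume "s \<in> S" "t \<in> S" then show "s \<circ> t \<in> S" by (rule compS)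
  next
    fix s assume "s \<in> S" then show "s \<circ> s = s" by (rule idemS)
  next
    fix s t assume "s \<in> S" "t \<in> S" then show "s \<circ> t = t \<circ> s" by (rule commS)
  next
    fix s t u :: "'a \<Rightarrow> 'a" show "s \<circ> t \<circ> u = s \<circ> (t \<circ> u)" by (rule comp_assoc)
  next
    fix s :: "'a \<Rightarrow> 'a" show "id \<circ> s = s" by simp
  qed
  have ac: "sl_action S (\<circ>) id C (\<lambda>c f. f c)"
    unfolding sl_action_def
  proof (intro conjI ballI)
    fix c f assume cf: "c \<in> C" "f \<in> S" then show "f c \<in> C" using dfC[OF Sdf[OF cf(2)] cf(1)] by simp
  next
    fix c f g assume cfg: "c \<in> C" "f \<in> S" "g \<in> S"
    have "f \<circ> g = g \<circ> f" using commS[OF cfg(2,3)] .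
    then have "(f \<circ> g) c = (g \<circ> f) c" by simp
    then show "(f \<circ> g) c = g (f c)" by simp
  next
    fix c show "id c = c" by simp
  qed
  have ord: "\<forall>c\<in>C. \<forall>d\<in>C. le c d \<longleftrightarrow> action_le S (\<lambda>c f. f c) (id c) (id d)"
  proof (intro ballI iffI)
    fix c d assume c: "c \<in> C" and d: "d \<in> C" and "le c d"
    then obtain f where f: "down_function C le f" and fd: "f d = c" using H by blast
    define f' where "f' = (\<lambda>x. if x \<in> C then f x else x)"
    have "down_function C le f'"
    proof (rule dfI)
      fix x assume x: "x \<in> C"
      show "f' x \<in> C" using dfC[OF f x] x unfolding f'_def by simp
      show "le (f' x) x" using dfle[OF f x] x unfolding f'_def by simp
    next
      fix x y assume xy: "x \<in> C" "y \<in> C" "le x y"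
      then show "le (f' x) (f' y)" using dfmono[OF f xy] unfolding f'_def by simp
    next
      fix x y assume xy: "x \<in> C" "y \<in> C" "le x (f' y)"
      then have "le x (f y)" unfolding f'_def by simp
      then show "f' x = x" using dffix[OF f xy(1,2)] xy unfolding f'_def by simp
    qed
    then have "f' \<in> S" by (rule SI) (simp add: f'_def)
    moreover have "f' d = c" using d fd unfolding f'_def by simp
    ultimately show "action_le S (\<lambda>c f. f c) (id c) (id d)" unfolding action_le_def by auto
  next
    fix c d assume c: "c \<in> C" and d: "d \<in> C" and "action_le S (\<lambda>c f. f c) (id c) (id d)"
    then obtain f where f: "f \<in> S" "f d = c" unfolding action_le_def by auto
    then show "le c d" using dfle[OF Sdf[OF f(1)] d] by simp
  qed
  have bij: "bij_betw id C C" by (rule bij_betw_id)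
  define S' where "S' = (\<lambda>f. {f}) ` S"
  define m' :: "('a \<Rightarrow> 'a) set \<Rightarrow> ('a \<Rightarrow> 'a) set \<Rightarrow> ('a \<Rightarrow> 'a) set"
    where "m' = (\<lambda>A B. {the_elem A \<circ> the_elem B})"
  define act' :: "'a \<Rightarrow> ('a \<Rightarrow> 'a) set \<Rightarrow> 'a" where "act' = (\<lambda>c A. the_elem A c)"
  have S'E: "\<And>A. A \<in> S' \<Longrightarrow> \<exists>f\<in>S. A = {f}" unfolding S'_def by blast
  have S'I: "\<And>f. f \<in> S \<Longrightarrow> {f} \<in> S'" unfolding S'_def by blast
  have sl': "semilattice_id S' m' {id}"
    unfolding semilattice_id_def
  proof (intro conjI ballI)
    show "{id} \<in> S'" using S'I[OF idS] .
  next
    fix A B assume "A \<in> S'" "B \<in> S'"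
    then obtain f g where "f \<in> S" "g \<in> S" "A = {f}" "B = {g}" using S'E by metis
    then show "m' A B \<in> S'" unfolding m'_def using S'I[OF compS] by simp
  next
    fix A assume "A \<in> S'"
    then obtain f where "f \<in> S" "A = {f}" using S'E by metis
    then show "m' A A = A" unfolding m'_def using idemS by simp
  next
    fix A B assume "A \<in> S'" "B \<in> S'"
    then obtain f g where "f \<in> S" "g \<in> S" "A = {f}" "B = {g}" using S'E by metis
    then show "m' A B = m' B A" unfolding m'_def using commS by simp
  next
    fix A B D assume "A \<in> S'" "B \<in> S'" "D \<in> S'"
    then show "m' (m' A B) D = m' A (m' B D)" unfolding m'_def by (simp add: comp_assoc)
  next
    fix A assume "A \<in> S'"
    then obtain f where "f \<in> S" "A = {f}" using S'E by metis
    then show "m' {id} A = A" unfolding m'_def by simp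
  qed
  have ac': "sl_action S' m' {id} C act'"
    unfolding sl_action_def
  proof (intro conjI ballI)
    fix c A assume c: "c \<in> C" and "A \<in> S'"
    then obtain f where f: "f \<in> S" "A = {f}" using S'E by metis
    then show "act' c A \<in> C" unfolding act'_def using dfC[OF Sdf[OF f(1)] c] by simp
  next
    fix c A B assume c: "c \<in> C" and "A \<in> S'" "B \<in> S'"
    then obtain f g where fg: "f \<in> S" "g \<in> S" "A = {f}" "B = {g}" using S'E by metis
    have "f \<circ> g = g \<circ> f" using commS[OF fg(1,2)] .
    then have "(f \<circ> g) c = (g \<circ> f) c" by simp
    then show "act' c (m' A B) = act' (act' c A) B" unfolding act'_def m'_def using fg by simp
  next
    fix c show "act' c {id} = c" unfolding act'_def by simp
  qed
  have ord': "\<forall>c\<in>C. \<forall>d\<in>C. le c d \<longleftrightarrow> action_le S' act' (id c) (id d)"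
  proof (intro ballI)
    fix c d assume c: "c \<in> C" and d: "d \<in> C"
    have "action_le S' act' (id c) (id d) \<longleftrightarrow> action_le S (\<lambda>c f. f c) (id c) (id d)"
      unfolding action_le_def act'_def S'_def by auto
    then show "le c d \<longleftrightarrow> action_le S' act' (id c) (id d)" using ord c d by simp
  qed
  show "down_poset TYPE(('a \<Rightarrow> 'a) set) TYPE('a) C le"
    unfolding down_poset_def
    apply (rule exI[of _ S'], rule exI[of _ m'], rule exI[of _ "{id}"], rule exI[of _ C],
           rule exI[of _ act'], rule exI[of _ id])
    apply (intro conjI)
       apply (rule sl')
      apply (rule ac')
     apply (rule bij)
    apply (rule ord')
    done
qed

end
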